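(* Fix $m\in\{1,\dots,M\}$, let $n=N_r-M+1$, let $R_{m,1},\dots,R_{m,K}>0$ and let $\phi_{m,1},\dots,\phi_{m,K}>0$ be the constants defined in the context. Let $\zeta_{m,k}^*$ and $\theta_{m,k}^*$ be the optimal solution of \[ \min\ \sum_{m=1}^M\sum_{k=1}^K \phi_{m,k}R_{m,k}\,\theta_{m,k}^{-n} \] subject to $\sum_{k=1}^K\zeta_{m,k}=\frac1M$ for all $m$; $\zeta_{m,k}>0$, $\theta_{m,k}>0$; and $\theta_{m,k}\le \frac{\zeta_{m,i}}{2^{R_{m,i}}-1}-\sum_{l=1}^{i-1}\zeta_{m,l}$ for all $m$, $k$ and $i\in\{k,\dots,K\}$. Then $\theta_{m,1}^*<\theta_{m,2}^*<\dots<\theta_{m,K}^*$, and consequently \[ \frac{\zeta_{m,1}^*}{2^{R_{m,1}}-1}<\frac{\zeta_{m,2}^*}{2^{R_{m,2}}-1}<\dots<\frac{\zeta_{m,K}^*}{2^{R_{m,K}}-1}. \]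
   Context: Setting: a base station with $N_t$ antennas serves $K$ clusters, each of $N_r$ single-antenna devices, each requesting $M\le\min(N_t,N_r)$ streams. $\mathbf R_t$, $\mathbf R_r$ are Hermitian positive definite correlation matrices, $\lambda_1,\dots,\lambda_{N_r}$ the eigenvalues of $\mathbf R_r$; $\mathbf V\in\mathbb C^{N_t\times M}$ with unit-norm columns, $\mathbf R_{t'}=\mathbf V^{\mathrm H}\mathbf R_t\mathbf V$ (invertible); $\bar\gamma>0$; path loss $\mathcal K d_k^{-\alpha}$ with $d_1\le\dots\le d_K$. With $W=(\lambda_i^{N_r-j})_{i,j}$ and $D$ equal to $W$ with first column replaced by $(\lambda_i^{M-2}\ln\lambda_i)_i$, $\phi_{m,k}=\frac{1}{N_r!\det\mathbf R_r}\big(\frac{[\mathbf R_{t'}^{-1}]_{mm}}{\bar\gamma\mathcal K d_k^{-\alpha}}\big)^{N_r}$ if $M=1$, and $\phi_{m,k}=\frac{(-1)^{N_r-M}(N_r-1)!\det D}{(N_r-M)!(N_r-M+1)!(M-2)!\det W}\big(\frac{[\mathbf R_{t'}^{-1}]_{mm}}{\bar\gamma\mathcal K d_k^{-\alpha}}\big)^{N_r-M+1}$ if $M>1$. (The optimal solution is given explicitly by $\boldsymbol\zeta_m^*=\mathbf L_m^{-1}\mathbf b_m/(M\mathbf 1_K^{\mathrm T}\mathbf L_m^{-1}\mathbf b_m)$, with $\mathbf L_m^{\mathrm T}=\mathbf U_m$ upper triangular, diagonal $1/(2^{R_{m,k}}-1)$, entries $-1$ above the diagonal, and $[\mathbf b_m]_k=\big(n\phi_{m,k}R_{m,k}/(\mathbf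 e_k^{\mathrm T}\mathbf U_m^{-1}\mathbf 1_K)\big)^{1/(n+1)}$.) *)

theory Defs
  imports "Jordan_Normal_Form.Schur_Decomposition"
begin

definition hpd_mat :: "complex mat \<Rightarrow> nat \<Rightarrow> bool" where
  "hpd_mat A n \<longleftrightarrow> A \<in> carrier_mat n n \<and> mat_adjoint A = A \<and>
     (\<forall>v \<in> carrier_vec n. v \<noteq> 0\<^sub>v n \<longrightarrow> Re ((A *\<^sub>v v) \<bullet>c v) > 0)"

definition mat_inv :: "complex mat \<Rightarrow> complex mat" where
  "mat_inv A = (THE B. B \<in> carrier_mat (dim_row A) (dim_row A) \<and> inverts_mat A B \<and> inverts_mat B A)"

text \<open>The matrix W = (lambda_i^(Nr-j))_{i,j}, indices 1..Nr stored 0-based.\<close>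
definition W_mat :: "nat \<Rightarrow> (nat \<Rightarrow> real) \<Rightarrow> real mat" where
  "W_mat Nr lam = mat Nr Nr (\<lambda>(i, j). lam (i + 1) ^ (Nr - (j + 1)))"

definition D_mat :: "nat \<Rightarrow> nat \<Rightarrow> (nat \<Rightarrow> real) \<Rightarrow> real mat" where
  "D_mat Nr M lam = mat Nr Nr (\<lambda>(i, j). if j = 0 then lam (i + 1) ^ (M - 2) * ln (lam (i + 1))
                                        else lam (i + 1) ^ (Nr - (j + 1)))"

text \<open>The constant phi_{m,k}: q = [R_{t'}^{-1}]_{mm}, detRr = det R_r,
  gam = bar gamma, Kc = path-loss constant, alpha = path-loss exponent, d = d_k.\<close>
definition phi_const :: "nat \<Rightarrow> nat \<Rightarrow> (nat \<Rightarrow> real) \<Rightarrow> real \<Rightarrow> real \<Rightarrow> real \<Rightarrow> real \<Rightarrow> real \<Rightarrow> real \<Rightarrow> real" where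
  "phi_const Nr M lam detRr q gam Kc alpha d =
     (let x = q / (gam * Kc * d powr (- alpha)) in
      if M = 1 then 1 / (fact Nr * detRr) * x ^ Nr
      else (-1) ^ (Nr - M) * fact (Nr - 1) * det (D_mat Nr M lam)
           / (fact (Nr - M) * fact (Nr - M + 1) * fact (M - 2) * det (W_mat Nr lam))
           * x ^ (Nr - M + 1))"

definition feasible :: "nat \<Rightarrow> nat \<Rightarrow> (nat \<Rightarrow> nat \<Rightarrow> real) \<Rightarrow> (nat \<Rightarrow> nat \<Rightarrow> real) \<Rightarrow> (nat \<Rightarrow> nat \<Rightarrow> real) \<Rightarrow> bool" where
  "feasible M K R zeta theta \<longleftrightarrow>
     (\<forall>m \<in> {1..M}. (\<Sum>k = 1..K. zeta m k) = 1 / real M) \<and>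
     (\<forall>m \<in> {1..M}. \<forall>k \<in> {1..K}. zeta m k > 0 \<and> theta m k > 0) \<and>
     (\<forall>m \<in> {1..M}. \<forall>k \<in> {1..K}. \<forall>i \<in> {k..K}.
        theta m k \<le> zeta m i / (2 powr R m i - 1) - (\<Sum>l = 1..i - 1. zeta m l))"

definition objective :: "nat \<Rightarrow> nat \<Rightarrow> nat \<Rightarrow> (nat \<Rightarrow> nat \<Rightarrow> real) \<Rightarrow> (nat \<Rightarrow> nat \<Rightarrow> real) \<Rightarrow> (nat \<Rightarrow> nat \<Rightarrow> real) \<Rightarrow> real" where
  "objective n M K phi R theta = (\<Sum>m = 1..M. \<Sum>k = 1..K. phi m k * R m k * inverse (theta m k ^ n))"

definition optimal :: "nat \<Rightarrow> nat \<Rightarrow> nat \<Rightarrow> (nat \<Rightarrow> nat \<Rightarrow> real) \<Rightarrow> (nat \<Rightarrow> nat \<Rightarrow> real) \<Rightarrow> (nat \<Rightarrow> nat \<Rightarrow> real) \<Rightarrow> (nat \<Rightarrow> nat \<Rightarrow> real) \<Rightarrow> bool" where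
  "optimal n M K phi R zeta theta \<longleftrightarrow> feasible M K R zeta theta \<and>
     (\<forall>zeta' theta'. feasible M K R zeta' theta' \<longrightarrow>
        objective n M K phi R theta \<le> objective n M K phi R theta')"

end

theory Submission
  imports Defs
begin

definition Pc :: "(nat \<Rightarrow> real) \<Rightarrow> nat \<Rightarrow> nat \<Rightarrow> real" where
  "Pc c i k = (\<Prod>j\<in>{Suc i..k}. 1 + c j)"

definition Tl :: "(nat \<Rightarrow> real) \<Rightarrow> (nat \<Rightarrow> real) \<Rightarrow> nat \<Rightarrow> real" where
  "Tl c th k = (\<Sum>i\<in>{1..k}. c i * Pc c i k * th i)"

lemma Pc_Suc: "i \<le> k \<Longrightarrow> Pc c i (Suc k) = Pc c i k * (1 + c (Suc k))"
  unfolding Pc_def by (simp add: prod.cl_ivl_Suc)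

lemma Pc_self: "Pc c k k = 1"
  unfolding Pc_def by simp

lemma Pc_split: "Suc i \<le> k \<Longrightarrow> Pc c i k = (1 + c (Suc i)) * Pc c (Suc i) k"
  unfolding Pc_def by (simp add: prod.atLeast_Suc_atMost)

lemma Pc_pos: "\<forall>i\<in>{1..K}. c i > 0 \<Longrightarrow> 1 \<le> i \<Longrightarrow> Pc c i K > 0"
  unfolding Pc_def
proof (intro prod_pos)
  fix a assume "\<forall>i\<in>{1..K}. c i > 0" "1 \<le> i" "a \<in> {Suc i..K}"
  then have "c a > 0" by auto
  then show "0 < 1 + c a" by simp
qed

lemma Tl_0 [simp]: "Tl c th 0 = 0"
  unfolding Tl_def by simp

lemma Tl_Suc: "Tl c th (Suc k) = (1 + c (Suc k)) * Tl c th k + c (Suc k) * th (Suc k)"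
proof -
  have "Tl c th (Suc k) = (\<Sum>i\<in>{1..k}. c i * Pc c i (Suc k) * th i) + c (Suc k) * th (Suc k)"
    unfolding Tl_def by (simp add: sum.cl_ivl_Suc Pc_self)
  also have "(\<Sum>i\<in>{1..k}. c i * Pc c i (Suc k) * th i) = (1 + c (Suc k)) * Tl c th k"
    unfolding Tl_def sum_distrib_left by (rule sum.cong) (auto simp: Pc_Suc)
  finally show ?thesis .
qed

lemma Tl_nonneg: "\<forall>i\<in>{1..K}. c i > 0 \<Longrightarrow> \<forall>i\<in>{1..K}. th i \<ge> 0 \<Longrightarrow> k \<le> K \<Longrightarrow> Tl c th k \<ge> 0"
proof (induction k)
  case 0 then show ?case by simp
next
  case (Suc k)
  then have "Tl c th k \<ge> 0" "c (Suc k) > 0" "th (Suc k) \<ge> 0" by auto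
  then show ?case by (simp add: Tl_Suc)
qed

lemma Tl_scale: "Tl c (\<lambda>i. s * th i) k = s * Tl c th k"
  unfolding Tl_def sum_distrib_left by (rule sum.cong) auto

lemma Tl_upd2:
  assumes "j \<noteq> l" "j \<in> {1..K}" "l \<in> {1..K}"
  shows "Tl c (th(j := th j + e1, l := th l + e2)) K = Tl c th K + c j * Pc c j K * e1 + c l * Pc c l K * e2"
proof -
  have "Tl c (th(j := th j + e1, l := th l + e2)) K =
     (\<Sum>i\<in>{1..K}. c i * Pc c i K * th i + ((if i = j then c j * Pc c j K * e1 else 0) + (if i = l then c l * Pc c l K * e2 else 0)))"
    unfolding Tl_def using assms by (intro sum.cong) (auto simp: algebra_simps)
  also have "\<dots> = Tl c th K + c j * Pc c j K * e1 + c l * Pc c l K * e2"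
    unfolding Tl_def sum.distrib using assms by simp
  finally show ?thesis .
qed

lemma mono_chain:
  assumes "\<forall>i\<in>{a..<b}. (f::nat\<Rightarrow>real) i \<le> f (Suc i)" "a \<le> k" "k \<le> i" "i \<le> b"
  shows "f k \<le> f i"
  using assms(3,4)
proof (induction i)
  case 0 then show ?case by simp
next
  case (Suc i)
  show ?case
  proof (cases "k = Suc i")
    case False
    then have "k \<le> i" using Suc by simp
    then have "f k \<le> f i" using Suc by simp
    moreover have "f i \<le> f (Suc i)" using assms(1) \<open>k \<le> i\<close> assms(2) Suc by auto
    ultimately show ?thesis by simp
  qed simp
qed

lemma smono_chain:
  assumes "\<forall>i\<in>{a..<b}. (f::nat\<Rightarrow>real) i < f (Suc i)" "a \<le> k" "k < i" "i \<le> b"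
  shows "f k < f i"
  using assms(3,4)
proof (induction i)
  case 0 then show ?case by simp
next
  case (Suc i)
  show ?case
  proof (cases "k = i")
    case False
    then have "k < i" using Suc by simp
    then have "f k < f i" using Suc by simp
    moreover have "f i < f (Suc i)" using assms(1) \<open>k < i\<close> assms(2) Suc by auto
    ultimately show ?thesis by simp
  next
    case True then show ?thesis using assms Suc by auto
  qed
qed

lemma D_step:
  assumes "c (Suc k) \<noteq> 0"
  shows "(\<Sum>l=1..Suc k. z l) - Tl c th (Suc k) =
     (1 + c (Suc k)) * ((\<Sum>l=1..k. z l) - Tl c th k) + c (Suc k) * ((z (Suc k) / c (Suc k) - (\<Sum>l=1..k. z l)) - th (Suc k))"
  using assms by (simp add: Tl_Suc sum.cl_ivl_Suc field_simps)

lemma construct: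
  assumes c: "\<forall>i\<in>{1..K}. c i > 0" and K: "1 \<le> K"
    and pos: "\<forall>i\<in>{1..K}. th i > 0"
    and mono: "\<forall>i\<in>{1..<K}. th i \<le> th (Suc i)"
    and T: "Tl c th K \<le> s"
  shows "\<exists>z. (\<Sum>l=1..K. z l) = s \<and> (\<forall>i\<in>{1..K}. z i > 0) \<and>
     (\<forall>k\<in>{1..K}. \<forall>i\<in>{k..K}. th k \<le> z i / c i - (\<Sum>l=1..i-1. z l))"
proof -
  define z where "z i = c i * (th i + Tl c th (i - 1)) + (if i = K then s - Tl c th K else 0)" for i
  have Tnn: "k \<le> K \<Longrightarrow> Tl c th k \<ge> 0" for k
    using Tl_nonneg[OF c] pos by (meson less_imp_le)
  have S: "k < K \<Longrightarrow> (\<Sum>l=1..k. z l) = Tl c th k" for k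
  proof (induction k)
    case 0 then show ?case by simp
  next
    case (Suc k)
    then show ?case by (simp add: sum.cl_ivl_Suc z_def Tl_Suc algebra_simps)
  qed
  obtain K' where K': "K = Suc K'" using K by (cases K) auto
  have "(\<Sum>l=1..K. z l) = s"
    using S[of K'] K' by (simp add: sum.cl_ivl_Suc z_def Tl_Suc algebra_simps)
  moreover have "\<forall>i\<in>{1..K}. z i > 0"
  proof
    fix i assume i: "i \<in> {1..K}"
    have "th i > 0" "c i > 0" "Tl c th (i - 1) \<ge> 0" using i c pos Tnn[of "i-1"] by auto
    then have "c i * (th i + Tl c th (i - 1)) > 0" by (simp add: add_pos_nonneg)
    moreover have "(if i = K then s - Tl c th K else 0) \<ge> 0" using T by auto
    ultimately show "z i > 0" unfolding z_def by linarith
  qed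
  moreover have "\<forall>k\<in>{1..K}. \<forall>i\<in>{k..K}. th k \<le> z i / c i - (\<Sum>l=1..i-1. z l)"
  proof (intro ballI)
    fix k i assume k: "k \<in> {1..K}" and i: "i \<in> {k..K}"
    have ci: "c i > 0" using c k i by auto
    have "th k \<le> th i" using mono_chain[OF mono, of k i] k i by auto
    also have "th i \<le> z i / c i - (\<Sum>l=1..i-1. z l)"
    proof -
      have Si: "(\<Sum>l=1..i-1. z l) = Tl c th (i - 1)" using S[of "i-1"] k i by auto
      have "z i / c i = th i + Tl c th (i - 1) + (if i = K then s - Tl c th K else 0) / c i"
        unfolding z_def using ci by (simp add: field_simps)
      moreover have "(if i = K then s - Tl c th K else 0) / c i \<ge> 0" using T ci by auto
      ultimately show ?thesis using Si by linarith
    qed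
    finally show "th k \<le> z i / c i - (\<Sum>l=1..i-1. z l)" .
  qed
  ultimately show ?thesis by blast
qed

lemma R_ineq:
  assumes "(R1::real) > 0" "R2 > 0"
  shows "R1 * (2 powr R2 - 1) < R2 * (2 powr R1 - 1) * 2 powr R2"
proof -
  have L: "ln (2::real) > 0" by simp
  have e1: "2 powr R1 = exp (R1 * ln 2)" by (simp add: powr_def)
  have e2: "2 powr R2 = exp (R2 * ln 2)" by (simp add: powr_def)
  have x1: "R1 * ln 2 > 0" "R2 * ln 2 > 0" using assms L by auto
  have a0: "1 - (- (R1 * ln 2)) < exp (- (- (R1 * ln 2)))"
    using exp_minus_greater[of "- (R1 * ln 2)"] x1 assms by simp
  have a: "R1 * ln 2 < 2 powr R1 - 1" using a0 e1 by simp
  have b0: "1 - R2 * ln 2 < exp (- (R2 * ln 2))"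
    using exp_minus_greater[of "R2 * ln 2"] x1 assms by simp
  have b: "2 powr R2 - 1 < R2 * ln 2 * 2 powr R2"
  proof -
    have "(1 - R2 * ln 2) * exp (R2 * ln 2) < exp (- (R2 * ln 2)) * exp (R2 * ln 2)"
      using b0 by (rule mult_strict_right_mono) simp
    also have "exp (- (R2 * ln 2)) * exp (R2 * ln 2) = 1" by (simp add: exp_minus)
    finally have "(1 - R2 * ln 2) * exp (R2 * ln 2) < 1" .
    then show ?thesis using e2 by (simp add: algebra_simps)
  qed
  have p2: "2 powr R2 > 0" by simp
  have "R1 * (2 powr R2 - 1) < R1 * (R2 * ln 2 * 2 powr R2)"
    using b assms by simp
  also have "\<dots> = (R1 * ln 2) * (R2 * 2 powr R2)" by simp
  also have "\<dots> < (2 powr R1 - 1) * (R2 * 2 powr R2)"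
    using a assms p2 by (intro mult_strict_right_mono) auto
  finally show ?thesis by (simp add: algebra_simps)
qed


lemma feasible_upd:
  assumes "feasible M K R zeta theta" "m \<in> {1..M}" "(\<Sum>k=1..K. z k) = 1 / real M"
    "\<forall>k\<in>{1..K}. z k > 0 \<and> t k > 0"
    "\<forall>k\<in>{1..K}. \<forall>i\<in>{k..K}. t k \<le> z i / (2 powr R m i - 1) - (\<Sum>l=1..i-1. z l)"
  shows "feasible M K R (zeta(m := z)) (theta(m := t))"
proof -
  have f1: "\<forall>m\<in>{1..M}. (\<Sum>k = 1..K. zeta m k) = 1 / real M"
   and f2: "\<forall>m\<in>{1..M}. \<forall>k\<in>{1..K}. zeta m k > 0 \<and> theta m k > 0"
   and f3: "\<forall>m\<in>{1..M}. \<forall>k\<in>{1..K}. \<forall>i\<in>{k..K}.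
        theta m k \<le> zeta m i / (2 powr R m i - 1) - (\<Sum>l = 1..i - 1. zeta m l)"
    using assms(1) unfolding feasible_def by blast+
  show ?thesis
    unfolding feasible_def
  proof (intro conjI ballI)
    fix m' assume m': "m' \<in> {1..M}"
    show "(\<Sum>k = 1..K. (zeta(m := z)) m' k) = 1 / real M"
      using f1 m' assms(3) by (cases "m' = m") simp_all
  next
    fix m' k assume m': "m' \<in> {1..M}" and k: "k \<in> {1..K}"
    show "(zeta(m := z)) m' k > 0"
      using f2 m' k assms(4) by (cases "m' = m") simp_all
  next
    fix m' k assume m': "m' \<in> {1..M}" and k: "k \<in> {1..K}"
    show "(theta(m := t)) m' k > 0"
      using f2 m' k assms(4) by (cases "m' = m") simp_all
  next
    fix m' k i assume m': "m' \<in> {1..M}" and k: "k \<in> {1..K}" and i: "i \<in> {k..K}"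
    show "(theta(m := t)) m' k \<le> (zeta(m := z)) m' i / (2 powr R m' i - 1) - (\<Sum>l = 1..i - 1. (zeta(m := z)) m' l)"
      using f3 m' k i assms(5) by (cases "m' = m") simp_all
  qed
qed

lemma sum_upd:
  fixes F :: "'a \<Rightarrow> 'b \<Rightarrow> real"
  assumes "finite A" "k \<in> A"
  shows "(\<Sum>i\<in>A. F i ((g(k:=v)) i)) = (\<Sum>i\<in>A. F i (g i)) - F k (g k) + F k v"
proof -
  have "(\<Sum>i\<in>A. F i ((g(k:=v)) i)) = F k v + (\<Sum>i\<in>A-{k}. F i ((g(k:=v)) i))"
    by (subst sum.remove[OF assms]) simp
  also have "(\<Sum>i\<in>A-{k}. F i ((g(k:=v)) i)) = (\<Sum>i\<in>A-{k}. F i (g i))"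
    by (rule sum.cong) auto
  also have "(\<Sum>i\<in>A. F i (g i)) = F k (g k) + (\<Sum>i\<in>A-{k}. F i (g i))"
    by (rule sum.remove[OF assms])
  ultimately show ?thesis by linarith
qed

definition rowobj :: "nat \<Rightarrow> (nat \<Rightarrow> nat \<Rightarrow> real) \<Rightarrow> (nat \<Rightarrow> nat \<Rightarrow> real) \<Rightarrow> nat \<Rightarrow> nat \<Rightarrow> (nat \<Rightarrow> real) \<Rightarrow> real" where
  "rowobj n phi R m K t = (\<Sum>k=1..K. phi m k * R m k * inverse (t k ^ n))"

lemma objective_upd:
  assumes "m \<in> {1..M}"
  shows "objective n M K phi R (theta(m:=t)) = objective n M K phi R theta - rowobj n phi R m K (theta m) + rowobj n phi R m K t"
  unfolding objective_def rowobj_def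
  using sum_upd[of "{1..M}" m "\<lambda>m' th. \<Sum>k=1..K. phi m' k * R m' k * inverse (th k ^ n)" theta t] assms
  by simp

lemma opt_row:
  assumes "optimal n M K phi R zeta theta" "m \<in> {1..M}" "(\<Sum>k=1..K. z k) = 1 / real M"
    "\<forall>k\<in>{1..K}. z k > 0 \<and> t k > 0"
    "\<forall>k\<in>{1..K}. \<forall>i\<in>{k..K}. t k \<le> z i / (2 powr R m i - 1) - (\<Sum>l=1..i-1. z l)"
  shows "rowobj n phi R m K (theta m) \<le> rowobj n phi R m K t"
proof -
  have "feasible M K R (zeta(m := z)) (theta(m := t))"
    using feasible_upd assms optimal_def by blast
  then have "objective n M K phi R theta \<le> objective n M K phi R (theta(m:=t))"
    using assms(1) unfolding optimal_def by blast
  then show ?thesis using objective_upd[OF assms(2)] by simp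
qed

theorem mainTheorem2:
  fixes Nt Nr M K m :: nat
    and Rt Rr V :: "complex mat"
    and lam :: "nat \<Rightarrow> real"
    and gam Kc alpha :: real
    and d :: "nat \<Rightarrow> real"
    and R zeta theta :: "nat \<Rightarrow> nat \<Rightarrow> real"
    and phi :: "nat \<Rightarrow> nat \<Rightarrow> real"
  assumes M_pos: "1 \<le> M" and M_le: "M \<le> Nt" "M \<le> Nr" and K_pos: "1 \<le> K"
    and Rt: "hpd_mat Rt Nt" and Rr: "hpd_mat Rr Nr"
    and eig: "char_poly Rr = (\<Prod>i = 1..Nr. [:- complex_of_real (lam i), 1:])"
    and V: "V \<in> carrier_mat Nt M" "\<forall>j < M. col V j \<bullet>c col V j = 1"
    and Rtp_inv: "invertible_mat (mat_adjoint V * Rt * V)"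
    and gam: "gam > 0" and Kc: "Kc > 0" and alpha: "alpha > 0"
    and d_pos: "\<forall>k \<in> {1..K}. d k > 0"
    and d_mono: "\<forall>k \<in> {1..<K}. d k \<le> d (k + 1)"
    and phi_def: "\<forall>m' \<in> {1..M}. \<forall>k \<in> {1..K}. phi m' k =
        phi_const Nr M lam (Re (det Rr))
          (Re (mat_inv (mat_adjoint V * Rt * V) $$ (m' - 1, m' - 1))) gam Kc alpha (d k)"
    and phi_pos: "\<forall>m' \<in> {1..M}. \<forall>k \<in> {1..K}. phi m' k > 0"
    and R_pos: "\<forall>m' \<in> {1..M}. \<forall>k \<in> {1..K}. R m' k > 0"
    and opt: "optimal (Nr - M + 1) M K phi R zeta theta"
    and m: "m \<in> {1..M}"
  shows "(\<forall>k \<in> {1..<K}. theta m k < theta m (k + 1)) \<and>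
         (\<forall>k \<in> {1..<K}. zeta m k / (2 powr R m k - 1) < zeta m (k + 1) / (2 powr R m (k + 1) - 1))"
proof -
  define n where "n = Nr - M + 1"
  define c where "c i = 2 powr R m i - 1" for i
  define th where "th = theta m"
  define z where "z = zeta m"
  define w where "w k = phi m k * R m k" for k
  define row where "row t = rowobj n phi R m K t" for t
  have row_eq: "row t = (\<Sum>k=1..K. w k * inverse (t k ^ n))" for t
    unfolding row_def rowobj_def w_def by simp
  have n1: "n \<ge> 1" by (simp add: n_def)
  have Rp: "\<forall>k\<in>{1..K}. R m k > 0" using R_pos m by auto
  have cpos: "\<forall>k\<in>{1..K}. c k > 0"
  proof
    fix k assume "k \<in> {1..K}"
    then have "R m k > 0" using Rp by auto
    then have "2 powr 0 < 2 powr R m k" by (intro powr_less_mono) auto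
    then show "c k > 0" by (simp add: c_def)
  qed
  have wpos: "\<forall>k\<in>{1..K}. w k > 0" using phi_pos R_pos m by (simp add: w_def)
  have feas: "feasible M K R zeta theta" using opt by (simp add: optimal_def)
  have sumz: "(\<Sum>k=1..K. z k) = 1 / real M" using feas m unfolding feasible_def z_def by auto
  have zpos: "\<forall>k\<in>{1..K}. z k > 0" using feas m unfolding feasible_def z_def by auto
  have thpos: "\<forall>k\<in>{1..K}. th k > 0" using feas m unfolding feasible_def th_def by auto
  have cons: "\<forall>k\<in>{1..K}. \<forall>i\<in>{k..K}. th k \<le> z i / c i - (\<Sum>l=1..i-1. z l)"
    using feas m unfolding feasible_def z_def th_def c_def by auto
  have better: "row th \<le> row t"
    if "(\<Sum>k=1..K. z' k) = 1 / real M" "\<forall>k\<in>{1..K}. z' k > 0 \<and> t k > 0"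
       "\<forall>k\<in>{1..K}. \<forall>i\<in>{k..K}. t k \<le> z' i / c i - (\<Sum>l=1..i-1. z' l)" for z' t
    using opt_row[OF opt m that[unfolded c_def]] unfolding row_def th_def n_def by simp
  have better2: "row th \<le> row t"
    if hyp: "\<forall>i\<in>{1..K}. t i > 0" "\<forall>i\<in>{1..<K}. t i \<le> t (Suc i)" "Tl c t K \<le> 1 / real M" for t
  proof -
    obtain z' where "(\<Sum>l=1..K. z' l) = 1 / real M" "\<forall>i\<in>{1..K}. z' i > 0"
       "\<forall>k\<in>{1..K}. \<forall>i\<in>{k..K}. t k \<le> z' i / c i - (\<Sum>l=1..i-1. z' l)"
      using construct[OF cpos K_pos hyp] by blast
    then show ?thesis using better[of z' t] hyp(1) by blast
  qed
  have rowupd: "row (t(k := v)) = row t - w k * inverse (t k ^ n) + w k * inverse (v ^ n)"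
    if "k \<in> {1..K}" for t k v
    unfolding row_eq using sum_upd[of "{1..K}" k "\<lambda>i x. w i * inverse (x ^ n)" t v] that by simp
  have invlt: "inverse (b ^ n) < inverse (a ^ n)" if "0 < a" "a < b" for a b :: real
  proof -
    have "a ^ n < b ^ n" using that n1 by (intro power_strict_mono) auto
    moreover have "0 < a ^ n" using that by simp
    ultimately show ?thesis by (rule less_imp_inverse_less)
  qed

  have mono: "\<forall>i\<in>{1..<K}. th i \<le> th (Suc i)"
  proof (rule ballI, rule ccontr)
    fix k assume k: "k \<in> {1..<K}" and "\<not> th k \<le> th (Suc k)"
    hence lt: "th (Suc k) < th k" by simp
    let ?t = "th(Suc k := th k)"
    have "row th \<le> row ?t"
    proof (rule better[of z])
      show "(\<Sum>k=1..K. z k) = 1 / real M" by (rule sumz)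
      show "\<forall>k\<in>{1..K}. z k > 0 \<and> ?t k > 0" using zpos thpos k by auto
      show "\<forall>k'\<in>{1..K}. \<forall>i\<in>{k'..K}. ?t k' \<le> z i / c i - (\<Sum>l=1..i-1. z l)"
      proof (intro ballI)
        fix k' i assume k': "k' \<in> {1..K}" and i: "i \<in> {k'..K}"
        show "?t k' \<le> z i / c i - (\<Sum>l=1..i-1. z l)"
        proof (cases "k' = Suc k")
          case True
          then have "i \<in> {k..K}" using i by auto
          then show ?thesis using cons k True by auto
        next
          case False
          then show ?thesis using cons k' i by auto
        qed
      qed
    qed
    moreover have "row ?t < row th"
    proof -
      have "Suc k \<in> {1..K}" using k by auto
      then have e: "row ?t = row th - w (Suc k) * inverse (th (Suc k) ^ n) + w (Suc k) * inverse (th k ^ n)"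
        using rowupd[of "Suc k" th "th k"] by simp
      have "th (Suc k) > 0" using thpos k by auto
      then have "inverse (th k ^ n) < inverse (th (Suc k) ^ n)" using invlt lt by blast
      moreover have "w (Suc k) > 0" using wpos k by auto
      ultimately have "w (Suc k) * inverse (th k ^ n) < w (Suc k) * inverse (th (Suc k) ^ n)"
        by (intro mult_strict_left_mono) auto
      then show ?thesis using e by linarith
    qed
    ultimately show False by linarith
  qed

  define S where "S k = (\<Sum>l=1..k. z l)" for k
  define D where "D k = S k - Tl c th k" for k
  have Dstep: "D (Suc k) = (1 + c (Suc k)) * D k + c (Suc k) * ((z (Suc k) / c (Suc k) - S k) - th (Suc k))"
    if "Suc k \<le> K" for k
  proof -
    have "Suc k \<in> {1..K}" using that by simp
    then have "c (Suc k) > 0" using cpos by blast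
    then have "c (Suc k) \<noteq> 0" by simp
    then show ?thesis unfolding D_def S_def using D_step by blast
  qed
  have gth: "th (Suc k) \<le> z (Suc k) / c (Suc k) - S k" if "Suc k \<le> K" for k
  proof -
    have "Suc k \<in> {1..K}" "Suc k \<in> {Suc k..K}" using that by auto
    then have "th (Suc k) \<le> z (Suc k) / c (Suc k) - (\<Sum>l=1..Suc k - 1. z l)" using cons by blast
    then show ?thesis unfolding S_def by simp
  qed
  have Dnn: "k \<le> K \<Longrightarrow> D k \<ge> 0" for k
  proof (induction k)
    case 0 then show ?case by (simp add: D_def S_def)
  next
    case (Suc k)
    then have "D k \<ge> 0" "c (Suc k) > 0" "th (Suc k) \<le> z (Suc k) / c (Suc k) - S k"
      using cpos gth by auto
    then show ?case using Dstep[OF Suc.prems] by (simp add: add_nonneg_nonneg)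
  qed
  have Dinc: "\<forall>i\<in>{0..<K}. D i \<le> D (Suc i)"
  proof
    fix i assume i: "i \<in> {0..<K}"
    then have "D i \<ge> 0" "c (Suc i) > 0" "th (Suc i) \<le> z (Suc i) / c (Suc i) - S i"
      using cpos gth Dnn by auto
    then have "c (Suc i) * D i \<ge> 0" "c (Suc i) * ((z (Suc i) / c (Suc i) - S i) - th (Suc i)) \<ge> 0"
      by simp_all
    moreover have "D (Suc i) = (1 + c (Suc i)) * D i + c (Suc i) * ((z (Suc i) / c (Suc i) - S i) - th (Suc i))"
      using Dstep[of i] i by simp
    ultimately show "D i \<le> D (Suc i)" by (simp add: algebra_simps)
  qed
  have Dmono: "k \<le> K \<Longrightarrow> D k \<le> D K" for k
    using mono_chain[OF Dinc, of k K] by simp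
  have SK: "S K = 1 / real M" using sumz S_def by simp
  have TK: "Tl c th K = 1 / real M"
  proof (rule ccontr)
    assume "Tl c th K \<noteq> 1 / real M"
    with Dnn[of K] have lt: "Tl c th K < 1 / real M" by (simp add: D_def SK)
    obtain K' where K': "K = Suc K'" using K_pos by (cases K) auto
    have "Tl c th K' \<ge> 0" using Tl_nonneg[OF cpos, of th K'] thpos K' by (simp add: less_imp_le)
    moreover have "c K > 0" "th K > 0" using cpos thpos K_pos by auto
    ultimately have Tpos: "Tl c th K > 0" using K' by (simp add: Tl_Suc add_nonneg_pos)
    define s where "s = (1 / real M) / Tl c th K"
    have "(1 / real M) / Tl c th K > Tl c th K / Tl c th K"
      using lt Tpos by (intro divide_strict_right_mono) auto
    then have s1: "s > 1" using Tpos by (simp add: s_def)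
    have "row th \<le> row (\<lambda>i. s * th i)"
    proof (rule better2)
      show "\<forall>i\<in>{1..K}. s * th i > 0" using thpos s1 by auto
      show "\<forall>i\<in>{1..<K}. s * th i \<le> s * th (Suc i)" using mono s1 by auto
      have "s * Tl c th K = 1 / real M" using Tpos by (simp add: s_def)
      then show "Tl c (\<lambda>i. s * th i) K \<le> 1 / real M" using Tl_scale[of c s th K] by simp
    qed
    moreover have "row (\<lambda>i. s * th i) = inverse (s ^ n) * row th"
      unfolding row_eq by (simp add: sum_distrib_left power_mult_distrib inverse_mult_distrib algebra_simps)
    moreover have "row th > 0" unfolding row_eq
      using wpos thpos K_pos by (intro sum_pos) auto
    moreover have "inverse (s ^ n) < 1"
    proof -
      have "s ^ n > 1" using s1 n1 by (intro one_less_power) auto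
      then show ?thesis using less_imp_inverse_less[of 1 "s ^ n"] by simp
    qed
    ultimately show False
      using mult_strict_right_mono[of "inverse (s ^ n)" 1 "row th"] by linarith
  qed
  have D0: "D K = 0" using TK SK D_def by simp
  have geq: "\<forall>i\<in>{1..K}. th i = z i / c i - S (i - 1)"
  proof
    fix i assume i: "i \<in> {1..K}"
    then obtain k where k: "i = Suc k" by (cases i) auto
    have "D k = 0" using Dnn[of k] Dmono[of k] D0 k i by auto
    moreover have "D (Suc k) = 0" using Dnn[of "Suc k"] Dmono[of "Suc k"] D0 k i by auto
    ultimately have "c (Suc k) * ((z (Suc k) / c (Suc k) - S k) - th (Suc k)) = 0"
      using Dstep[of k] k i by simp
    moreover have "c (Suc k) > 0" using cpos k i by auto
    ultimately show "th i = z i / c i - S (i - 1)" using k by simp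
  qed

  have phimono: "\<forall>i\<in>{1..<K}. phi m i \<le> phi m (Suc i)"
  proof -
    define q where "q = Re (mat_inv (mat_adjoint V * Rt * V) $$ (m - 1, m - 1))"
    define A where "A = (if M = 1 then 1 / (fact Nr * Re (det Rr)) else
        (-1) ^ (Nr - M) * fact (Nr - 1) * det (D_mat Nr M lam)
           / (fact (Nr - M) * fact (Nr - M + 1) * fact (M - 2) * det (W_mat Nr lam)))"
    define C where "C = A * (q / (gam * Kc)) ^ n"
    have phiC: "phi m k = C * (d k powr alpha) ^ n" if k: "k \<in> {1..K}" for k
    proof -
      have dk: "d k > 0" using d_pos k by auto
      have x: "q / (gam * Kc * d k powr (- alpha)) = q / (gam * Kc) * d k powr alpha"
        using dk gam Kc by (simp add: powr_minus field_simps)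
      have pk: "phi m k = phi_const Nr M lam (Re (det Rr)) q gam Kc alpha (d k)"
        using phi_def m k unfolding q_def by blast
      have "phi_const Nr M lam (Re (det Rr)) q gam Kc alpha (d k) = A * (q / (gam * Kc * d k powr (- alpha))) ^ n"
      proof (cases "M = 1")
        case True
        then have "n = Nr" using M_le by (simp add: n_def)
        then show ?thesis unfolding phi_const_def Let_def A_def using True by simp
      next
        case False
        then show ?thesis unfolding phi_const_def Let_def A_def n_def by simp
      qed
      then have "phi m k = A * (q / (gam * Kc * d k powr (- alpha))) ^ n" using pk by simp
      then show ?thesis unfolding x C_def by (simp only: power_mult_distrib mult.assoc)
    qed
    have "1 \<in> {1..K}" using K_pos by auto
    then have "C * (d 1 powr alpha) ^ n > 0" using phiC phi_pos m by metis
    moreover have "(d 1 powr alpha) ^ n > 0"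
    proof -
      have "d 1 > 0" using d_pos K_pos by auto
      then have "d 1 powr alpha > 0" by simp
      then show ?thesis by simp
    qed
    ultimately have Cpos: "C > 0" by (simp add: zero_less_mult_iff)
    show ?thesis
    proof
      fix i assume i: "i \<in> {1..<K}"
      have "d i \<le> d (Suc i)" "d i > 0" using d_mono d_pos i by auto
      then have "d i powr alpha \<le> d (Suc i) powr alpha" using alpha by (intro powr_mono2) auto
      then have "(d i powr alpha) ^ n \<le> (d (Suc i) powr alpha) ^ n" by (intro power_mono) auto
      then show "phi m i \<le> phi m (Suc i)" using phiC i Cpos by (simp add: mult_left_mono)
    qed
  qed

  have smono: "\<forall>k\<in>{1..<K}. th k < th (Suc k)"
  proof (rule ballI, rule ccontr)
    fix k assume k: "k \<in> {1..<K}" and nlt: "\<not> th k < th (Suc k)"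
    define t0 where "t0 = th k"
    have eqk: "th (Suc k) = t0" using mono k nlt t0_def by force
    define J where "J = {i\<in>{1..k}. th i = t0}"
    define L where "L = {i\<in>{Suc k..K}. th i = t0}"
    define j where "j = Min J"
    define l where "l = Max L"
    have finJ: "finite J" "k \<in> J" using k unfolding J_def t0_def by auto
    have finL: "finite L" "Suc k \<in> L" using k eqk unfolding L_def by auto
    have jJ: "j \<in> J" unfolding j_def using finJ by (intro Min_in) auto
    have lL: "l \<in> L" unfolding l_def using finL by (intro Max_in) auto
    have j1: "1 \<le> j" "j \<le> k" "th j = t0" using jJ J_def by auto
    have l1: "Suc k \<le> l" "l \<le> K" "th l = t0" using lL L_def by auto
    have jl: "j < l" using j1 l1 by simp
    have jprev: "th (j - 1) < t0" if "1 < j"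
    proof -
      have "j - 1 \<in> {1..<K}" using that j1 k by auto
      then have "th (j - 1) \<le> th (Suc (j - 1))" using mono by blast
      then have le: "th (j - 1) \<le> t0" using that j1 by simp
      have "th (j - 1) \<noteq> t0"
      proof
        assume "th (j - 1) = t0"
        then have "j - 1 \<in> J" using that j1 unfolding J_def by auto
        then have "j \<le> j - 1" unfolding j_def using finJ by (intro Min_le) auto
        then show False using that by simp
      qed
      then show ?thesis using le by simp
    qed
    have lnext: "t0 < th (Suc l)" if "l < K"
    proof -
      have "l \<in> {1..<K}" using that l1 k by auto
      then have le: "t0 \<le> th (Suc l)" using mono l1 by force
      have "th (Suc l) \<noteq> t0"
      proof
        assume "th (Suc l) = t0"
        then have "Suc l \<in> L" using that l1 unfolding L_def by auto
        then have "Suc l \<le> l" unfolding l_def using finL by (intro Max_ge) auto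
        then show False by simp
      qed
      then show ?thesis using le by simp
    qed
    have blk: "th i = t0" if "i \<in> {j..l}" for i
    proof -
      have "th j \<le> th i" using mono_chain[OF mono, of j i] that j1 l1 by auto
      moreover have "th i \<le> th l" using mono_chain[OF mono, of i l] that j1 l1 by auto
      ultimately show ?thesis using j1 l1 by simp
    qed
    have tpos: "t0 > 0" using thpos j1 k jJ unfolding J_def by auto
    define a where "a i = c i * Pc c i K" for i
    have apos: "\<forall>i\<in>{1..K}. a i > 0" unfolding a_def using cpos Pc_pos[OF cpos] by auto
    have alpos: "a l > 0" "a j > 0"
    proof -
      have "l \<in> {1..K}" "j \<in> {1..K}" using j1 l1 k by auto
      then show "a l > 0" "a j > 0" using apos by blast+
    qed
    have rstep: "\<forall>i\<in>{1..<K}. w i / a i < w (Suc i) / a (Suc i)"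
    proof
      fix i assume i: "i \<in> {1..<K}"
      have Pi: "Pc c i K = (1 + c (Suc i)) * Pc c (Suc i) K" using i by (intro Pc_split) auto
      have P: "Pc c (Suc i) K > 0" using Pc_pos[OF cpos] by simp
      have ci: "c i > 0" "c (Suc i) > 0" using cpos i by auto
      have Ri: "R m i > 0" "R m (Suc i) > 0" using Rp i by auto
      have ph: "phi m i \<le> phi m (Suc i)" "phi m i > 0" "phi m (Suc i) > 0"
        using phimono phi_pos m i by auto
      have Rin: "R m i * c (Suc i) < R m (Suc i) * c i * (1 + c (Suc i))"
        using R_ineq[OF Ri] unfolding c_def by simp
      have "w i * c (Suc i) = phi m i * (R m i * c (Suc i))" by (simp add: w_def)
      also have "\<dots> \<le> phi m (Suc i) * (R m i * c (Suc i))"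
        using ph Ri ci by (intro mult_right_mono) auto
      also have "\<dots> < phi m (Suc i) * (R m (Suc i) * c i * (1 + c (Suc i)))"
        using ph Rin by (intro mult_strict_left_mono) auto
      finally have key1: "w i * c (Suc i) < w (Suc i) * (c i * (1 + c (Suc i)))"
        by (simp add: w_def algebra_simps)
      have "w i * a (Suc i) < w (Suc i) * a i"
        using mult_strict_right_mono[OF key1 P] unfolding a_def Pi by (simp add: algebra_simps)
      moreover have "a i > 0" "a (Suc i) > 0" using apos i by auto
      ultimately show "w i / a i < w (Suc i) / a (Suc i)" by (simp add: field_simps)
    qed
    have "w j / a j < w l / a l"
      using smono_chain[OF rstep, of j l] j1 l1 by auto
    moreover have "a j > 0" "a l > 0" using apos j1 l1 k by auto
    ultimately have key: "w j * a l < w l * a j" by (simp add: field_simps)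
    define \<phi> where "\<phi> = (\<lambda>h. w j * inverse ((t0 - a l * h) ^ n) + w l * inverse ((t0 + a j * h) ^ n))"
    define Dv where "Dv = - (w j * (inverse (t0 ^ n) * (real n * t0 ^ (n - 1) * (- a l)) * inverse (t0 ^ n)))
        - w l * (inverse (t0 ^ n) * (real n * t0 ^ (n - 1) * a j) * inverse (t0 ^ n))"
    have deriv: "(\<phi> has_real_derivative Dv) (at 0)"
      unfolding \<phi>_def Dv_def using tpos
      by (auto intro!: derivative_eq_intros)
    have Dvneg: "Dv < 0"
    proof -
      have "Dv = (real n * t0 ^ (n - 1) * inverse (t0 ^ n) * inverse (t0 ^ n)) * (w j * a l - w l * a j)"
        unfolding Dv_def by (simp add: algebra_simps)
      moreover have "real n * t0 ^ (n - 1) * inverse (t0 ^ n) * inverse (t0 ^ n) > 0"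
        using n1 tpos by auto
      ultimately show ?thesis using key by (simp add: mult_pos_neg)
    qed
    obtain \<delta>0 where d0: "\<delta>0 > 0" "\<forall>h>0. h < \<delta>0 \<longrightarrow> \<phi> 0 > \<phi> (0 + h)"
      using DERIV_neg_dec_right[OF deriv Dvneg] by blast
    define h where "h = min (\<delta>0 / 2) (min (t0 / (2 * a l))
        (min (if 1 < j then (t0 - th (j - 1)) / a l else 1) (if l < K then (th (Suc l) - t0) / a j else 1)))"
    have hpos: "h > 0" unfolding h_def using d0 tpos alpos jprev lnext by auto
    have hd: "h < \<delta>0" unfolding h_def using d0 by auto
    have h1: "a l * h < t0"
    proof -
      have "h \<le> t0 / (2 * a l)" unfolding h_def by auto
      then have "a l * h \<le> a l * (t0 / (2 * a l))" using alpos by (intro mult_left_mono) auto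
      then show ?thesis using alpos tpos by auto
    qed
    have h2: "th (j - 1) \<le> t0 - a l * h" if "1 < j"
    proof -
      have "h \<le> (t0 - th (j - 1)) / a l" unfolding h_def using that by auto
      then show ?thesis using alpos by (simp add: field_simps)
    qed
    have h3: "t0 + a j * h \<le> th (Suc l)" if "l < K"
    proof -
      have "h \<le> (th (Suc l) - t0) / a j" unfolding h_def using that by auto
      then show ?thesis using alpos by (simp add: field_simps)
    qed
    have ajh: "a j * h > 0" "a l * h > 0" using alpos hpos by auto
    define t where "t = th(j := th j + (- (a l * h)), l := th l + a j * h)"
    have tj: "t j = t0 - a l * h" using jl j1 unfolding t_def by simp
    have tl: "t l = t0 + a j * h" using l1 unfolding t_def by simp
    have to: "t i = th i" if "i \<noteq> j" "i \<noteq> l" for i using that unfolding t_def by simp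
    have Tt: "Tl c t K = Tl c th K"
      unfolding t_def using Tl_upd2[of j l K c th "- (a l * h)" "a j * h"] jl j1 l1 k
      by (simp add: a_def algebra_simps)
    have "row th \<le> row t"
    proof (rule better2)
      show "\<forall>i\<in>{1..K}. t i > 0"
      proof
        fix i assume i: "i \<in> {1..K}"
        show "t i > 0"
        proof (cases "i = j")
          case True then show ?thesis using tj h1 by simp
        next
          case False
          show ?thesis
          proof (cases "i = l")
            case True then show ?thesis using tl tpos ajh by simp
          next
            case False then show ?thesis using to \<open>i \<noteq> j\<close> thpos i by simp
          qed
        qed
      qed
      show "\<forall>i\<in>{1..<K}. t i \<le> t (Suc i)"
      proof
        fix i assume i: "i \<in> {1..<K}"
        consider "i = j" | "i = l" | "i \<noteq> j" "i \<noteq> l" by blast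
        then show "t i \<le> t (Suc i)"
        proof cases
          case 1
          show ?thesis
          proof (cases "Suc i = l")
            case True then show ?thesis using tj tl 1 ajh by simp
          next
            case False
            then have "Suc i \<in> {j..l}" "Suc i \<noteq> j" "Suc i \<noteq> l" using 1 jl by auto
            then show ?thesis using tj to blk 1 ajh by simp
          qed
        next
          case 2
          then have "l < K" using i by auto
          then show ?thesis using tl to[of "Suc l"] h3 2 jl by simp
        next
          case 3
          show ?thesis
          proof (cases "Suc i = j")
            case True
            have jj: "1 < j" "j - 1 = i" using True i by auto
            then have "th i \<le> t0 - a l * h" using h2 by metis
            then show ?thesis using to[OF 3] tj True by simp
          next
            case False
            show ?thesis
            proof (cases "Suc i = l")
              case True
              then have "i \<in> {j..l}" using 3 jl by auto
              then show ?thesis using True to 3 tl blk ajh by simp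
            next
              case False
              then show ?thesis using \<open>Suc i \<noteq> j\<close> to 3 mono i by simp
            qed
          qed
        qed
      qed
      show "Tl c t K \<le> 1 / real M" using Tt TK by simp
    qed
    moreover have "row t = row th - \<phi> 0 + \<phi> h"
    proof -
      have jK: "j \<in> {1..K}" "l \<in> {1..K}" using j1 l1 k by auto
      have "t = (th(j := t0 - a l * h))(l := t0 + a j * h)" unfolding t_def using j1 l1 by simp
      then have "row t = row (th(j := t0 - a l * h)) - w l * inverse (t0 ^ n) + w l * inverse ((t0 + a j * h) ^ n)"
        using rowupd[OF jK(2), of "th(j := t0 - a l * h)" "t0 + a j * h"] jl l1 by simp
      also have "row (th(j := t0 - a l * h)) = row th - w j * inverse (t0 ^ n) + w j * inverse ((t0 - a l * h) ^ n)"
        using rowupd[OF jK(1), of th "t0 - a l * h"] j1 by simp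
      finally show ?thesis unfolding \<phi>_def by simp
    qed
    moreover have "\<phi> h < \<phi> 0"
    proof -
      have "\<phi> (0 + h) < \<phi> 0" using d0(2) hpos hd by blast
      then show ?thesis by simp
    qed
    ultimately show False by linarith
  qed

  show ?thesis
  proof
    show "\<forall>k\<in>{1..<K}. theta m k < theta m (k + 1)" using smono th_def by simp
    show "\<forall>k\<in>{1..<K}. zeta m k / (2 powr R m k - 1) < zeta m (k + 1) / (2 powr R m (k + 1) - 1)"
    proof
      fix k assume k: "k \<in> {1..<K}"
      have kk: "k \<in> {1..K}" "Suc k \<in> {1..K}" using k by auto
      have "th k = z k / c k - S (k - 1)" using geq kk(1) by blast
      then have e1: "z k / c k = th k + S (k - 1)" by simp
      have "th (Suc k) = z (Suc k) / c (Suc k) - S (Suc k - 1)" using geq kk(2) by blast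
      then have e2: "z (Suc k) / c (Suc k) = th (Suc k) + S k" by simp
      obtain k' where k': "k = Suc k'" using kk by (cases k) auto
      have e3: "S k = S (k - 1) + z k" unfolding S_def k' by (simp add: sum.cl_ivl_Suc)
      have "th k < th (Suc k)" "z k > 0" using smono zpos k by auto
      then have "z k / c k < z (Suc k) / c (Suc k)" using e1 e2 e3 by linarith
      then show "zeta m k / (2 powr R m k - 1) < zeta m (k + 1) / (2 powr R m (k + 1) - 1)"
        unfolding z_def c_def by simp
    qed
  qed
qed

end
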